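(* Let $U$ be a random $\beta$-orthogonal permutation-invariant $m\times m$ matrix, let $\Pi$ be a uniformly random $m\times m$ permutation matrix, and let $\Lambda_1,\Lambda_2$ be random real diagonal $m\times m$ matrices such that $\Lambda_1$, $\Lambda_2$ are independent of each other and of $U$ and of $\Pi$ (with finite moments). Then for $k=1,2,3$, $$\varphi\!\left[(\Lambda_1+U^{-1}\Lambda_2U)^k\right]=\varphi\!\left[(\Lambda_1+\Pi^{-1}\Lambda_2\Pi)^k\right]=\sum_{j=0}^{k}\binom{k}{j}\varphi[\Lambda_1^{j}]\,\varphi[\Lambda_2^{k-j}].$$ In particular the first three moments of $\Lambda_1+U^{-1}\Lambda_2U$ do not depend on the distribution of $U$ (they coincide for $U=Q_s$, $U=\Pi$ and $U$ Haar distributed).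
   Context: Fix integers $m\ge 2$ and $\beta\in\{1,2,4\}$. A $\beta$-orthogonal matrix is an $m\times m$ real orthogonal ($\beta=1$), complex unitary ($\beta=2$) or quaternionic unitary/symplectic ($\beta=4$) matrix; $U^{-1}=U^{*}$. A random $\beta$-orthogonal matrix $U$ is called permutation invariant if for all $m\times m$ permutation matrices $\Pi_1,\Pi_2$ the joint distribution of the entries of $\Pi_1U\Pi_2$ equals that of $U$. For a random $m\times m$ matrix $X$, $\varphi[X]:=\frac1m\mathbb{E}\,\mathrm{Tr}\,X$ (for $\beta=4$, $\mathrm{Tr}$ denotes the real part of the trace). *)

theory Defs
  imports "HOL-Probability.Probability"
begin

text \<open>Quaternions are represented as pairs (a,b) of complex numbers, standing for a + b j
  with j z = cnj z j for complex z. Real numbers are (r,0) with r real, complex numbers (z,0).\<close>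

type_synonym quat = "complex \<times> complex"

definition qmul :: "quat \<Rightarrow> quat \<Rightarrow> quat" where
  "qmul x y = (fst x * fst y - snd x * cnj (snd y), fst x * snd y + snd x * cnj (fst y))"

definition qcnj :: "quat \<Rightarrow> quat" where
  "qcnj x = (cnj (fst x), - snd x)"

definition qone :: quat where "qone = (1, 0)"

definition in_K :: "nat \<Rightarrow> quat \<Rightarrow> bool" where
  "in_K \<beta> q = (if \<beta> = 1 then snd q = 0 \<and> Im (fst q) = 0
               else if \<beta> = 2 then snd q = 0 else True)"

type_synonym 'n qmat = "quat ^ 'n ^ 'n"

definition qmat_mul :: "'n::finite qmat \<Rightarrow> 'n qmat \<Rightarrow> 'n qmat" where
  "qmat_mul A B = (\<chi> i j. \<Sum>k\<in>UNIV. qmul (A $ i $ k) (B $ k $ j))"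

definition qmat_adj :: "'n::finite qmat \<Rightarrow> 'n qmat" where
  "qmat_adj A = (\<chi> i j. qcnj (A $ j $ i))"

definition qmat_one :: "'n::finite qmat" where
  "qmat_one = (\<chi> i j. if i = j then qone else 0)"

fun qmat_pow :: "'n::finite qmat \<Rightarrow> nat \<Rightarrow> 'n qmat" where
  "qmat_pow A 0 = qmat_one"
| "qmat_pow A (Suc k) = qmat_mul A (qmat_pow A k)"

definition real_diag :: "real ^ 'n \<Rightarrow> 'n::finite qmat" where
  "real_diag d = (\<chi> i j. if i = j then (complex_of_real (d $ i), 0) else 0)"

definition perm_qmat :: "('n \<Rightarrow> 'n) \<Rightarrow> 'n::finite qmat" where
  "perm_qmat p = (\<chi> i j. if p i = j then qone else 0)"

definition qtrace_re :: "'n::finite qmat \<Rightarrow> real" where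
  "qtrace_re A = (\<Sum>i\<in>UNIV. Re (fst (A $ i $ i)))"

definition beta_orthogonal :: "nat \<Rightarrow> 'n::finite qmat \<Rightarrow> bool" where
  "beta_orthogonal \<beta> U \<longleftrightarrow> (\<forall>i j. in_K \<beta> (U $ i $ j))
     \<and> qmat_mul (qmat_adj U) U = qmat_one \<and> qmat_mul U (qmat_adj U) = qmat_one"

definition qphi :: "'a measure \<Rightarrow> ('a \<Rightarrow> 'n::finite qmat) \<Rightarrow> real" where
  "qphi M X = (\<integral>\<omega>. qtrace_re (X \<omega>) \<partial>M) / real CARD('n)"

end

theory Submission
  imports Defs
begin

definition qn :: "quat \<Rightarrow> real" where "qn x = (cmod (fst x))^2 + (cmod (snd x))^2"

lemma qmul_assoc: "qmul (qmul x y) z = qmul x (qmul y z)"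
  by (simp add: qmul_def prod_eq_iff algebra_simps)

lemma qmul_add_left: "qmul (x + y) z = qmul x z + qmul y z"
  by (simp add: qmul_def prod_eq_iff algebra_simps)
lemma qmul_add_right: "qmul x (y + z) = qmul x y + qmul x z"
  by (simp add: qmul_def prod_eq_iff algebra_simps)
lemma qmul_zero_left[simp]: "qmul 0 x = 0" by (simp add: qmul_def prod_eq_iff)
lemma qmul_zero_right[simp]: "qmul x 0 = 0" by (simp add: qmul_def prod_eq_iff)
lemma qmul_one_left[simp]: "qmul qone x = x" by (simp add: qmul_def qone_def prod_eq_iff)
lemma qmul_one_right[simp]: "qmul x qone = x" by (simp add: qmul_def qone_def prod_eq_iff)
lemma qmul_sum_left: "qmul (\<Sum>k\<in>S. f k) z = (\<Sum>k\<in>S. qmul (f k) z)"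
  by (induction S rule: infinite_finite_induct) (auto simp: qmul_add_left)
lemma qmul_sum_right: "qmul z (\<Sum>k\<in>S. f k) = (\<Sum>k\<in>S. qmul z (f k))"
  by (induction S rule: infinite_finite_induct) (auto simp: qmul_add_right)
lemma Re_fst_sum: "Re (fst (\<Sum>k\<in>S. f k)) = (\<Sum>k\<in>S. Re (fst (f k)))"
  by (induction S rule: infinite_finite_induct) auto
lemma qmul_comm_Re: "Re (fst (qmul x y)) = Re (fst (qmul y x))"
  by (simp add: qmul_def)
lemma qcnj_zero[simp]: "qcnj 0 = 0" by (simp add: qcnj_def prod_eq_iff)
lemma qcnj_one[simp]: "qcnj qone = qone" by (simp add: qcnj_def qone_def prod_eq_iff)
lemma qmul_real_left: "Re (fst (qmul (complex_of_real r, 0) z)) = r * Re (fst z)"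
  by (simp add: qmul_def)
lemma qn_conj: "Re (fst (qmul (qmul (qcnj x) (complex_of_real d, 0)) x)) = d * qn x"
  by (simp add: qmul_def qcnj_def qn_def cmod_def power2_eq_square algebra_simps)
lemma qn_conj1: "Re (fst (qmul (qcnj x) x)) = qn x"
  by (simp add: qmul_def qcnj_def qn_def cmod_def power2_eq_square algebra_simps)
lemma qn_conj2: "Re (fst (qmul x (qcnj x))) = qn x"
  by (simp add: qmul_def qcnj_def qn_def cmod_def power2_eq_square algebra_simps)

lemma qmul_if_left: "qmul (if P then x else y) z = (if P then qmul x z else qmul y z)" by simp
lemma qmul_if_right: "qmul z (if P then x else y) = (if P then qmul z x else qmul z y)" by simp
lemma fst_if: "fst (if P then x else y) = (if P then fst x else fst y)" by simp
lemma qmul_reals: "qmul (complex_of_real r, 0) (complex_of_real s, 0) = (complex_of_real (r * s), 0)"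
  by (simp add: qmul_def)

lemma qmat_mul_nth: "qmat_mul A B $ i $ j = (\<Sum>k\<in>UNIV. qmul (A $ i $ k) (B $ k $ j))"
  by (simp add: qmat_mul_def)

lemma qmat_mul_assoc: "qmat_mul (qmat_mul A B) C = qmat_mul A (qmat_mul B C)"
proof -
  have "(\<Sum>k\<in>UNIV. \<Sum>j\<in>UNIV. qmul (qmul (A $ i $ j) (B $ j $ k)) (C $ k $ l))
      = (\<Sum>j\<in>UNIV. \<Sum>k\<in>UNIV. qmul (qmul (A $ i $ j) (B $ j $ k)) (C $ k $ l))" for i l
    by (rule sum.swap)
  then show ?thesis
    by (simp add: vec_eq_iff qmat_mul_nth qmul_sum_left qmul_sum_right qmul_assoc)
qed

lemma qmat_mul_add_left: "qmat_mul (A + B) C = qmat_mul A C + qmat_mul B C"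
  by (simp add: vec_eq_iff qmat_mul_nth qmul_add_left sum.distrib)
lemma qmat_mul_add_right: "qmat_mul A (B + C) = qmat_mul A B + qmat_mul A C"
  by (simp add: vec_eq_iff qmat_mul_nth qmul_add_right sum.distrib)

lemma qmat_mul_one_right[simp]: "qmat_mul A qmat_one = A"
  by (simp add: vec_eq_iff qmat_mul_nth qmat_one_def qmul_if_left qmul_if_right cong: if_cong)
lemma qmat_mul_one_left[simp]: "qmat_mul qmat_one A = A"
  by (simp add: vec_eq_iff qmat_mul_nth qmat_one_def qmul_if_left qmul_if_right cong: if_cong)

lemma qtrace_add: "qtrace_re (A + B) = qtrace_re A + qtrace_re B"
  by (simp add: qtrace_re_def sum.distrib)

lemma qtrace_comm: "qtrace_re (qmat_mul A B) = qtrace_re (qmat_mul B A)"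
  unfolding qtrace_re_def qmat_mul_nth Re_fst_sum
  by (subst sum.swap) (simp add: qmul_comm_Re)

lemma real_diag_mul: "qmat_mul (real_diag c) (real_diag d) = real_diag (c * d)"
  by (simp add: vec_eq_iff qmat_mul_nth real_diag_def qmul_reals qmul_if_left qmul_if_right cong: if_cong)

lemma qtrace_real_diag: "qtrace_re (real_diag c) = (\<Sum>i\<in>UNIV. c $ i)"
  by (simp add: qtrace_re_def real_diag_def)

lemma qtrace_conj_unitary:
  assumes "qmat_mul V (qmat_adj V) = qmat_one"
  shows "qtrace_re (qmat_mul (qmat_mul (qmat_adj V) Z) V) = qtrace_re Z"
  by (metis assms qmat_mul_assoc qmat_mul_one_right qtrace_comm)

lemma qtrace_diag_conj:
  "qtrace_re (qmat_mul (real_diag c) (qmat_mul (qmat_mul (qmat_adj V) (real_diag d)) V))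
    = (\<Sum>i\<in>UNIV. \<Sum>l\<in>UNIV. c $ i * d $ l * qn (V $ l $ i))"
proof -
  have 1: "qmat_mul (qmat_adj V) (real_diag d) $ i $ k = qmul (qcnj (V $ k $ i)) (complex_of_real (d $ k), 0)" for i k
    by (simp add: qmat_mul_nth qmat_adj_def real_diag_def qmul_if_left qmul_if_right cong: if_cong)
  have 2: "qmat_mul (real_diag c) Z $ i $ i = qmul (complex_of_real (c $ i), 0) (Z $ i $ i)" for Z i
    by (simp add: qmat_mul_nth real_diag_def qmul_if_left qmul_if_right cong: if_cong)
  show ?thesis
    unfolding qtrace_re_def 2 qmul_real_left qmat_mul_nth[of "qmat_mul (qmat_adj V) (real_diag d)"] 1
    by (simp add: Re_fst_sum qn_conj sum_distrib_left mult.assoc)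
qed

lemma row_sum:
  assumes "qmat_mul V (qmat_adj V) = qmat_one"
  shows "(\<Sum>i\<in>UNIV. qn (V $ l $ i)) = 1"
proof -
  have "Re (fst (qmat_mul V (qmat_adj V) $ l $ l)) = 1" using assms by (simp add: qmat_one_def qone_def)
  then show ?thesis by (simp add: qmat_mul_nth qmat_adj_def Re_fst_sum qn_conj2)
qed

lemma col_sum:
  assumes "qmat_mul (qmat_adj V) V = qmat_one"
  shows "(\<Sum>l\<in>UNIV. qn (V $ l $ i)) = 1"
proof -
  have "Re (fst (qmat_mul (qmat_adj V) V $ i $ i)) = 1" using assms by (simp add: qmat_one_def qone_def)
  then show ?thesis by (simp add: qmat_mul_nth qmat_adj_def Re_fst_sum qn_conj1)
qed

definition mixg :: "real^'n \<Rightarrow> real^'n \<Rightarrow> 'n::finite qmat \<Rightarrow> nat \<Rightarrow> nat \<Rightarrow> real" where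
  "mixg a b V p q = (\<Sum>i\<in>UNIV. \<Sum>l\<in>UNIV. (a $ i) ^ p * (b $ l) ^ q * qn (V $ l $ i))"

lemma trace_formula:
  fixes V :: "'n::finite qmat"
  assumes u1: "qmat_mul (qmat_adj V) V = qmat_one" and u2: "qmat_mul V (qmat_adj V) = qmat_one"
    and k: "k \<in> {1,2,3::nat}"
  shows "qtrace_re (qmat_pow (real_diag a + qmat_mul (qmat_mul (qmat_adj V) (real_diag b)) V) k)
     = (\<Sum>j = 0..k. real (k choose j) * mixg a b V j (k - j))"
proof -
  define X where "X = real_diag a"
  define Y where "Y = real_diag b"
  define B where "B = qmat_mul (qmat_mul (qmat_adj V) Y) V"
  have conjmul: "qmat_mul (qmat_mul (qmat_mul (qmat_adj V) P) V) (qmat_mul (qmat_mul (qmat_adj V) Q) V)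
      = qmat_mul (qmat_mul (qmat_adj V) (qmat_mul P Q)) V" for P Q
  proof -
    have "qmat_mul (qmat_mul (qmat_mul (qmat_adj V) P) V) (qmat_mul (qmat_mul (qmat_adj V) Q) V)
       = qmat_mul (qmat_mul (qmat_adj V) P) (qmat_mul (qmat_mul V (qmat_adj V)) (qmat_mul Q V))"
      by (simp add: qmat_mul_assoc)
    also have "\<dots> = qmat_mul (qmat_mul (qmat_adj V) (qmat_mul P Q)) V"
      by (simp add: u2 qmat_mul_assoc)
    finally show ?thesis .
  qed
  have BB: "qmat_mul B B = qmat_mul (qmat_mul (qmat_adj V) (real_diag (b * b))) V"
    unfolding B_def conjmul Y_def real_diag_mul ..
  have BBB: "qmat_mul B (qmat_mul B B) = qmat_mul (qmat_mul (qmat_adj V) (real_diag (b * (b * b)))) V"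
    unfolding BB unfolding B_def conjmul Y_def real_diag_mul ..
  have mp0: "mixg a b V p 0 = (\<Sum>i\<in>UNIV. (a $ i) ^ p)" for p
    using col_sum[OF u1] by (simp add: mixg_def flip: sum_distrib_left)
  have m0q: "mixg a b V 0 q = (\<Sum>l\<in>UNIV. (b $ l) ^ q)" for q
    using row_sum[OF u2] by (subst mixg_def, subst sum.swap) (simp flip: sum_distrib_left)
  have tB: "qtrace_re B = mixg a b V 0 1" unfolding B_def m0q
    by (simp add: qtrace_conj_unitary[OF u2] Y_def qtrace_real_diag)
  have tBB: "qtrace_re (qmat_mul B B) = mixg a b V 0 2" unfolding BB m0q
    by (simp add: qtrace_conj_unitary[OF u2] qtrace_real_diag power2_eq_square)
  have tBBB: "qtrace_re (qmat_mul B (qmat_mul B B)) = mixg a b V 0 3" unfolding BBB m0q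
    by (simp add: qtrace_conj_unitary[OF u2] qtrace_real_diag power3_eq_cube mult.assoc)
  have tX: "qtrace_re X = mixg a b V 1 0" unfolding mp0 X_def by (simp add: qtrace_real_diag)
  have tXX: "qtrace_re (qmat_mul X X) = mixg a b V 2 0" unfolding mp0 X_def
    by (simp add: qtrace_real_diag real_diag_mul power2_eq_square)
  have tXXX: "qtrace_re (qmat_mul X (qmat_mul X X)) = mixg a b V 3 0" unfolding mp0 X_def
    by (simp add: qtrace_real_diag real_diag_mul power3_eq_cube mult.assoc)
  have tXB: "qtrace_re (qmat_mul X B) = mixg a b V 1 1" unfolding X_def B_def Y_def
    by (simp add: qtrace_diag_conj mixg_def)
  have tXXB: "qtrace_re (qmat_mul (qmat_mul X X) B) = mixg a b V 2 1" unfolding X_def B_def Y_def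
    by (simp add: qtrace_diag_conj mixg_def real_diag_mul power2_eq_square)
  have tXBB: "qtrace_re (qmat_mul X (qmat_mul B B)) = mixg a b V 1 2" unfolding X_def BB
    by (simp add: qtrace_diag_conj mixg_def power2_eq_square)
  have tBX: "qtrace_re (qmat_mul B X) = qtrace_re (qmat_mul X B)" by (rule qtrace_comm)
  have t1: "qtrace_re (qmat_mul X (qmat_mul X B)) = qtrace_re (qmat_mul (qmat_mul X X) B)"
    by (simp add: qmat_mul_assoc)
  have t2: "qtrace_re (qmat_mul X (qmat_mul B X)) = qtrace_re (qmat_mul (qmat_mul X X) B)"
    by (metis qmat_mul_assoc qtrace_comm)
  have t3: "qtrace_re (qmat_mul B (qmat_mul X X)) = qtrace_re (qmat_mul (qmat_mul X X) B)"
    by (rule qtrace_comm)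
  have t4: "qtrace_re (qmat_mul B (qmat_mul X B)) = qtrace_re (qmat_mul X (qmat_mul B B))"
    by (metis qmat_mul_assoc qtrace_comm)
  have t5: "qtrace_re (qmat_mul B (qmat_mul B X)) = qtrace_re (qmat_mul X (qmat_mul B B))"
    by (metis qmat_mul_assoc qtrace_comm)
  have e: "real_diag a + qmat_mul (qmat_mul (qmat_adj V) (real_diag b)) V = X + B"
    by (simp add: X_def B_def Y_def)
  from k consider "k = 1" | "k = 2" | "k = 3" by auto
  then show ?thesis
  proof cases
    case 1
    then show ?thesis unfolding e
      by (simp add: qmat_mul_add_left qmat_mul_add_right qtrace_add tX tB)
  next
    case 2
    then show ?thesis unfolding e
      by (simp add: qmat_mul_add_left qmat_mul_add_right qtrace_add tXX tXB tBX tBB eval_nat_numeral)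
  next
    case 3
    then show ?thesis unfolding e
      by (simp add: qmat_mul_add_left qmat_mul_add_right qtrace_add t1 t2 t3 t4 t5
          tXXX tXXB tXBB tBBB eval_nat_numeral)
  qed
qed

lemma (in prob_space) indep_var_rect:
  assumes X: "X \<in> measurable M S" and Y: "Y \<in> measurable M T"
  and r: "\<forall>A\<in>sets S. \<forall>B\<in>sets T. measure M {\<omega>\<in>space M. X \<omega> \<in> A \<and> Y \<omega> \<in> B}
        = measure M {\<omega>\<in>space M. X \<omega> \<in> A} * measure M {\<omega>\<in>space M. Y \<omega> \<in> B}"
  shows "indep_var S X T Y"
proof -
  have "indep_set {X -` A \<inter> space M | A. A \<in> sets S} {Y -` A \<inter> space M | A. A \<in> sets T}"
  proof (rule indep_setI)
    show "{X -` A \<inter> space M | A. A \<in> sets S} \<subseteq> events" using X by auto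
    show "{Y -` A \<inter> space M | A. A \<in> sets T} \<subseteq> events" using Y by auto
    fix a b assume "a \<in> {X -` A \<inter> space M | A. A \<in> sets S}" "b \<in> {Y -` A \<inter> space M | A. A \<in> sets T}"
    then obtain A B where A: "A \<in> sets S" "a = X -` A \<inter> space M" and B: "B \<in> sets T" "b = Y -` B \<inter> space M"
      by auto
    have e1: "a \<inter> b = {\<omega>\<in>space M. X \<omega> \<in> A \<and> Y \<omega> \<in> B}" using A B by auto
    have e2: "a = {\<omega>\<in>space M. X \<omega> \<in> A}" "b = {\<omega>\<in>space M. Y \<omega> \<in> B}" using A B by auto
    show "prob (a \<inter> b) = prob a * prob b" unfolding e1 using r A(1) B(1) by (simp add: e2)
  qed
  then show ?thesis
    unfolding indep_var_def indep_vars_def2 indep_set_def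
    using X Y
    apply (intro conjI)
     apply (auto split: bool.split)[1]
    apply (erule back_subst[where P="\<lambda>F. indep_sets F UNIV"])
    apply (rule ext)
    apply (auto split: bool.split)
    done
qed

lemma (in prob_space) indep_var_rect_comp:
  fixes f :: "'b \<Rightarrow> real" and g :: "'c \<Rightarrow> real"
  assumes X: "X \<in> measurable M S" and Y: "Y \<in> measurable M T"
  and r: "\<forall>A\<in>sets S. \<forall>B\<in>sets T. measure M {\<omega>\<in>space M. X \<omega> \<in> A \<and> Y \<omega> \<in> B}
        = measure M {\<omega>\<in>space M. X \<omega> \<in> A} * measure M {\<omega>\<in>space M. Y \<omega> \<in> B}"
  and f: "f \<in> borel_measurable S" and g: "g \<in> borel_measurable T"
  shows "indep_var borel (\<lambda>\<omega>. f (X \<omega>)) borel (\<lambda>\<omega>. g (Y \<omega>))"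
proof (rule indep_var_rect)
  show "(\<lambda>\<omega>. f (X \<omega>)) \<in> borel_measurable M" using X f by measurable
  show "(\<lambda>\<omega>. g (Y \<omega>)) \<in> borel_measurable M" using Y g by measurable
  show "\<forall>A\<in>sets borel. \<forall>B\<in>sets borel. measure M {\<omega>\<in>space M. f (X \<omega>) \<in> A \<and> g (Y \<omega>) \<in> B}
        = measure M {\<omega>\<in>space M. f (X \<omega>) \<in> A} * measure M {\<omega>\<in>space M. g (Y \<omega>) \<in> B}"
  proof (intro ballI)
    fix A B :: "real set" assume A: "A \<in> sets borel" and B: "B \<in> sets borel"
    have A': "f -` A \<inter> space S \<in> sets S" using f A by (rule measurable_sets)
    have B': "g -` B \<inter> space T \<in> sets T" using g B by (rule measurable_sets)
    have XS: "\<omega> \<in> space M \<Longrightarrow> X \<omega> \<in> space S" for \<omega> using X by (rule measurable_space)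
    have YT: "\<omega> \<in> space M \<Longrightarrow> Y \<omega> \<in> space T" for \<omega> using Y by (rule measurable_space)
    have e1: "{\<omega>\<in>space M. f (X \<omega>) \<in> A \<and> g (Y \<omega>) \<in> B}
       = {\<omega>\<in>space M. X \<omega> \<in> f -` A \<inter> space S \<and> Y \<omega> \<in> g -` B \<inter> space T}"
      using XS YT by auto
    have e2: "{\<omega>\<in>space M. f (X \<omega>) \<in> A} = {\<omega>\<in>space M. X \<omega> \<in> f -` A \<inter> space S}"
      using XS by auto
    have e3: "{\<omega>\<in>space M. g (Y \<omega>) \<in> B} = {\<omega>\<in>space M. Y \<omega> \<in> g -` B \<inter> space T}"
      using YT by auto
    show "measure M {\<omega>\<in>space M. f (X \<omega>) \<in> A \<and> g (Y \<omega>) \<in> B}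
        = measure M {\<omega>\<in>space M. f (X \<omega>) \<in> A} * measure M {\<omega>\<in>space M. g (Y \<omega>) \<in> B}"
      unfolding e1 e2 e3 using r A' B' by blast
  qed
qed

lemma (in prob_space) E_mixg:
  fixes L1 L2 :: "'a \<Rightarrow> real^'n::finite" and W :: "'a \<Rightarrow> 'n \<Rightarrow> 'n \<Rightarrow> real"
  assumes i12: "\<And>(f::real^'n \<Rightarrow> real) (g::real^'n \<Rightarrow> real). f \<in> borel_measurable borel \<Longrightarrow> g \<in> borel_measurable borel \<Longrightarrow>
       indep_var borel (\<lambda>\<omega>. f (L1 \<omega>)) borel (\<lambda>\<omega>. g (L2 \<omega>))"
   and iW: "\<And>(f::(real^'n) \<times> (real^'n) \<Rightarrow> real) i l. f \<in> borel_measurable borel \<Longrightarrow>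
       indep_var borel (\<lambda>\<omega>. f (L1 \<omega>, L2 \<omega>)) borel (\<lambda>\<omega>. W \<omega> i l)"
   and intW: "\<And>i l. integrable M (\<lambda>\<omega>. W \<omega> i l)"
   and EW: "\<And>i l. (\<integral>\<omega>. W \<omega> i l \<partial>M) = 1 / real CARD('n)"
   and m1: "\<And>i k. integrable M (\<lambda>\<omega>. (L1 \<omega> $ i) ^ k)"
   and m2: "\<And>i k. integrable M (\<lambda>\<omega>. (L2 \<omega> $ i) ^ k)"
  shows "integrable M (\<lambda>\<omega>. \<Sum>i\<in>UNIV. \<Sum>l\<in>UNIV. (L1 \<omega> $ i) ^ p * (L2 \<omega> $ l) ^ q * W \<omega> i l)
    \<and> (\<integral>\<omega>. (\<Sum>i\<in>UNIV. \<Sum>l\<in>UNIV. (L1 \<omega> $ i) ^ p * (L2 \<omega> $ l) ^ q * W \<omega> i l) \<partial>M)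
     = (\<Sum>i\<in>UNIV. \<integral>\<omega>. (L1 \<omega> $ i) ^ p \<partial>M) * (\<Sum>l\<in>UNIV. \<integral>\<omega>. (L2 \<omega> $ l) ^ q \<partial>M) / real CARD('n)"
proof -
  have tm: "integrable M (\<lambda>\<omega>. (L1 \<omega> $ i) ^ p * (L2 \<omega> $ l) ^ q * W \<omega> i l) \<and>
     (\<integral>\<omega>. (L1 \<omega> $ i) ^ p * (L2 \<omega> $ l) ^ q * W \<omega> i l \<partial>M)
       = (\<integral>\<omega>. (L1 \<omega> $ i) ^ p \<partial>M) * (\<integral>\<omega>. (L2 \<omega> $ l) ^ q \<partial>M) / real CARD('n)" for i l
  proof -
    have ind_ab: "indep_var borel (\<lambda>\<omega>. (L1 \<omega> $ i) ^ p) borel (\<lambda>\<omega>. (L2 \<omega> $ l) ^ q)"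
      by (rule i12[of "\<lambda>x. (x $ i) ^ p" "\<lambda>x. (x $ l) ^ q"]) measurable
    have int_ab: "integrable M (\<lambda>\<omega>. (L1 \<omega> $ i) ^ p * (L2 \<omega> $ l) ^ q)"
      by (rule indep_var_integrable[OF ind_ab m1 m2])
    have E_ab: "(\<integral>\<omega>. (L1 \<omega> $ i) ^ p * (L2 \<omega> $ l) ^ q \<partial>M)
       = (\<integral>\<omega>. (L1 \<omega> $ i) ^ p \<partial>M) * (\<integral>\<omega>. (L2 \<omega> $ l) ^ q \<partial>M)"
      by (rule indep_var_lebesgue_integral[OF ind_ab m1 m2])
    have ind2: "indep_var borel (\<lambda>\<omega>. (L1 \<omega> $ i) ^ p * (L2 \<omega> $ l) ^ q) borel (\<lambda>\<omega>. W \<omega> i l)"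
    proof -
      have "(\<lambda>z::(real^'n) \<times> (real^'n). (fst z $ i) ^ p * (snd z $ l) ^ q) \<in> borel_measurable borel"
        by (intro borel_measurable_continuous_onI continuous_intros)
      then show ?thesis using iW[of "\<lambda>z. (fst z $ i) ^ p * (snd z $ l) ^ q" i l] by simp
    qed
    show ?thesis
      using indep_var_integrable[OF ind2 int_ab intW] indep_var_lebesgue_integral[OF ind2 int_ab intW]
      by (simp add: E_ab EW)
  qed
  have "(\<integral>\<omega>. (\<Sum>i\<in>UNIV. \<Sum>l\<in>UNIV. (L1 \<omega> $ i) ^ p * (L2 \<omega> $ l) ^ q * W \<omega> i l) \<partial>M)
      = (\<Sum>i\<in>UNIV. \<Sum>l\<in>UNIV. (\<integral>\<omega>. (L1 \<omega> $ i) ^ p * (L2 \<omega> $ l) ^ q * W \<omega> i l \<partial>M))"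
    using tm by (simp add: integral_sum integrable_sum)
  also have "\<dots> = (\<Sum>i\<in>UNIV. \<Sum>l\<in>UNIV. (\<integral>\<omega>. (L1 \<omega> $ i) ^ p \<partial>M) * (\<integral>\<omega>. (L2 \<omega> $ l) ^ q \<partial>M) / real CARD('n))"
    using tm by simp
  also have "\<dots> = (\<Sum>i\<in>UNIV. \<integral>\<omega>. (L1 \<omega> $ i) ^ p \<partial>M) * (\<Sum>l\<in>UNIV. \<integral>\<omega>. (L2 \<omega> $ l) ^ q \<partial>M) / real CARD('n)"
    by (simp add: sum_product sum_divide_distrib)
  finally show ?thesis using tm by (simp add: integrable_sum)
qed

lemma cont_cnj[continuous_intros]: "continuous_on S f \<Longrightarrow> continuous_on S (\<lambda>x. cnj (f x))"
  unfolding continuous_on_def by (auto intro: tendsto_cnj)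

lemma cont_qmul[continuous_intros]:
  "continuous_on S f \<Longrightarrow> continuous_on S g \<Longrightarrow> continuous_on S (\<lambda>x. qmul (f x) (g x))"
  unfolding qmul_def by (intro continuous_intros)

lemma cont_qmat_mul[continuous_intros]:
  fixes f g :: "'b::topological_space \<Rightarrow> 'n::finite qmat"
  shows "continuous_on S f \<Longrightarrow> continuous_on S g \<Longrightarrow> continuous_on S (\<lambda>x. qmat_mul (f x) (g x))"
  unfolding qmat_mul_def by (intro continuous_intros)

lemma cont_qmat_pow[continuous_intros]:
  fixes f :: "'b::topological_space \<Rightarrow> 'n::finite qmat"
  shows "continuous_on S f \<Longrightarrow> continuous_on S (\<lambda>x. qmat_pow (f x) k)"
  by (induction k) (simp_all add: continuous_intros qmat_one_def)

lemma cont_real_diag[continuous_intros]: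
  fixes f :: "'b::topological_space \<Rightarrow> real^'n::finite"
  shows "continuous_on S f \<Longrightarrow> continuous_on S (\<lambda>x. real_diag (f x))"
  unfolding real_diag_def
  apply (intro continuous_intros)
  subgoal for i j by (cases "i = j") (simp_all add: continuous_intros)
  done

lemma cont_qtrace[continuous_intros]:
  fixes f :: "'b::topological_space \<Rightarrow> 'n::finite qmat"
  shows "continuous_on S f \<Longrightarrow> continuous_on S (\<lambda>x. qtrace_re (f x))"
  unfolding qtrace_re_def by (intro continuous_intros)

lemma meas_trace_fixed:
  fixes P :: "'n::finite qmat"
  shows "(\<lambda>z::(real^'n) \<times> (real^'n). qtrace_re (qmat_pow (real_diag (fst z) + qmat_mul (qmat_mul (qmat_adj P) (real_diag (snd z))) P) k)) \<in> borel_measurable borel"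
  by (intro borel_measurable_continuous_onI continuous_intros)

lemma pow_real_diag: "qmat_pow (real_diag a) j = real_diag (\<chi> i. (a $ i) ^ j)"
proof (induction j)
  case 0
  then show ?case by (simp add: vec_eq_iff qmat_one_def real_diag_def qone_def)
next
  case (Suc j)
  have "a * (\<chi> i. (a $ i) ^ j) = (\<chi> i. (a $ i) ^ Suc j)" by (simp add: vec_eq_iff)
  then show ?case by (simp add: Suc.IH real_diag_mul)
qed

lemma (in prob_space) qphi_diag:
  fixes L :: "'a \<Rightarrow> real^'n::finite"
  assumes "\<And>i. integrable M (\<lambda>\<omega>. (L \<omega> $ i) ^ j)"
  shows "qphi M (\<lambda>\<omega>. qmat_pow (real_diag (L \<omega>)) j) = (\<Sum>i\<in>UNIV. \<integral>\<omega>. (L \<omega> $ i) ^ j \<partial>M) / real CARD('n)"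
  unfolding qphi_def pow_real_diag qtrace_real_diag using assms by (simp add: integral_sum)

lemma (in prob_space) moment_formula:
  fixes L1 L2 :: "'a \<Rightarrow> real^'n::finite" and V :: "'a \<Rightarrow> 'n qmat"
  assumes i12: "\<And>(f::real^'n \<Rightarrow> real) (g::real^'n \<Rightarrow> real). f \<in> borel_measurable borel \<Longrightarrow> g \<in> borel_measurable borel \<Longrightarrow>
       indep_var borel (\<lambda>\<omega>. f (L1 \<omega>)) borel (\<lambda>\<omega>. g (L2 \<omega>))"
   and iW: "\<And>(f::(real^'n) \<times> (real^'n) \<Rightarrow> real) i l. f \<in> borel_measurable borel \<Longrightarrow>
       indep_var borel (\<lambda>\<omega>. f (L1 \<omega>, L2 \<omega>)) borel (\<lambda>\<omega>. qn (V \<omega> $ l $ i))"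
   and intW: "\<And>i l. integrable M (\<lambda>\<omega>. qn (V \<omega> $ l $ i))"
   and EW: "\<And>i l. (\<integral>\<omega>. qn (V \<omega> $ l $ i) \<partial>M) = 1 / real CARD('n)"
   and m1: "\<And>i k. integrable M (\<lambda>\<omega>. (L1 \<omega> $ i) ^ k)"
   and m2: "\<And>i k. integrable M (\<lambda>\<omega>. (L2 \<omega> $ i) ^ k)"
   and unit: "AE \<omega> in M. qmat_mul (qmat_adj (V \<omega>)) (V \<omega>) = qmat_one \<and> qmat_mul (V \<omega>) (qmat_adj (V \<omega>)) = qmat_one"
   and meas: "(\<lambda>\<omega>. qtrace_re (qmat_pow (real_diag (L1 \<omega>) + qmat_mul (qmat_mul (qmat_adj (V \<omega>)) (real_diag (L2 \<omega>))) (V \<omega>)) k)) \<in> borel_measurable M"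
   and k: "k \<in> {1,2,3::nat}"
  shows "qphi M (\<lambda>\<omega>. qmat_pow (real_diag (L1 \<omega>) + qmat_mul (qmat_mul (qmat_adj (V \<omega>)) (real_diag (L2 \<omega>))) (V \<omega>)) k)
    = (\<Sum>j = 0..k. real (k choose j) * qphi M (\<lambda>\<omega>. qmat_pow (real_diag (L1 \<omega>)) j)
                                      * qphi M (\<lambda>\<omega>. qmat_pow (real_diag (L2 \<omega>)) (k - j)))"
proof -
  define m where "m = real CARD('n)"
  have m0: "m > 0" by (simp add: m_def)
  define SA where "SA j = (\<Sum>i\<in>UNIV. \<integral>\<omega>. (L1 \<omega> $ i) ^ j \<partial>M)" for j
  define SB where "SB j = (\<Sum>i\<in>UNIV. \<integral>\<omega>. (L2 \<omega> $ i) ^ j \<partial>M)" for j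
  have EM: "integrable M (\<lambda>\<omega>. mixg (L1 \<omega>) (L2 \<omega>) (V \<omega>) p q) \<and>
      (\<integral>\<omega>. mixg (L1 \<omega>) (L2 \<omega>) (V \<omega>) p q \<partial>M) = SA p * SB q / m" for p q
    unfolding mixg_def SA_def SB_def m_def
    by (rule E_mixg[where W="\<lambda>\<omega> i l. qn (V \<omega> $ l $ i)", OF i12 iW intW EW m1 m2])
  have "(\<integral>\<omega>. qtrace_re (qmat_pow (real_diag (L1 \<omega>) + qmat_mul (qmat_mul (qmat_adj (V \<omega>)) (real_diag (L2 \<omega>))) (V \<omega>)) k) \<partial>M)
     = (\<integral>\<omega>. (\<Sum>j = 0..k. real (k choose j) * mixg (L1 \<omega>) (L2 \<omega>) (V \<omega>) j (k - j)) \<partial>M)"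
  proof (rule integral_cong_AE)
    show "(\<lambda>\<omega>. \<Sum>j = 0..k. real (k choose j) * mixg (L1 \<omega>) (L2 \<omega>) (V \<omega>) j (k - j)) \<in> borel_measurable M"
      using EM by (intro borel_measurable_sum borel_measurable_times borel_measurable_const) auto
    show "AE \<omega> in M. qtrace_re (qmat_pow (real_diag (L1 \<omega>) + qmat_mul (qmat_mul (qmat_adj (V \<omega>)) (real_diag (L2 \<omega>))) (V \<omega>)) k)
       = (\<Sum>j = 0..k. real (k choose j) * mixg (L1 \<omega>) (L2 \<omega>) (V \<omega>) j (k - j))"
      using unit by eventually_elim (use k in \<open>auto intro: trace_formula\<close>)
  qed (rule meas)
  also have "\<dots> = (\<Sum>j = 0..k. real (k choose j) * (SA j * SB (k - j) / m))"
    using EM by (simp add: integral_sum)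
  finally have L: "qphi M (\<lambda>\<omega>. qmat_pow (real_diag (L1 \<omega>) + qmat_mul (qmat_mul (qmat_adj (V \<omega>)) (real_diag (L2 \<omega>))) (V \<omega>)) k)
     = (\<Sum>j = 0..k. real (k choose j) * (SA j * SB (k - j) / m)) / m"
    unfolding qphi_def m_def by simp
  have R: "qphi M (\<lambda>\<omega>. qmat_pow (real_diag (L1 \<omega>)) j) = SA j / m"
     "qphi M (\<lambda>\<omega>. qmat_pow (real_diag (L2 \<omega>)) j) = SB j / m" for j
    unfolding SA_def SB_def m_def by (rule qphi_diag, rule m1) (rule qphi_diag, rule m2)
  show ?thesis unfolding L R
    by (simp add: sum_divide_distrib mult.assoc)
qed

lemma perm_left: "qmat_mul (perm_qmat p) X $ a $ b = X $ (p a) $ b"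
  by (simp add: qmat_mul_nth perm_qmat_def qmul_if_left cong: if_cong)

lemma tr_eq: "Transposition.transpose x y k = b \<longleftrightarrow> k = Transposition.transpose x y b"
  by (auto simp: Transposition.transpose_def)

lemma perm_right_tr: "qmat_mul X (perm_qmat (Transposition.transpose x y)) $ a $ b = X $ a $ (Transposition.transpose x y b)"
  by (simp add: qmat_mul_nth perm_qmat_def qmul_if_right tr_eq cong: if_cong)

lemma qn_qone[simp]: "qn qone = 1" by (simp add: qn_def qone_def)
lemma qn_zero[simp]: "qn 0 = 0" by (simp add: qn_def)
lemma qn_nonneg: "qn x \<ge> 0" by (simp add: qn_def)

lemma qn_perm: "qn (perm_qmat p $ l $ i) = (if p l = i then 1 else 0)"
  by (simp add: perm_qmat_def)

lemma perm_unitary: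
  assumes p: "p permutes UNIV"
  shows "qmat_mul (qmat_adj (perm_qmat p)) (perm_qmat p) = qmat_one"
    "qmat_mul (perm_qmat p) (qmat_adj (perm_qmat p)) = qmat_one"
proof -
  have e: "p k = i \<longleftrightarrow> k = inv p i" for k i using permutes_inv_eq[OF p] by metis
  have ii: "inv p a = inv p b \<longleftrightarrow> a = b" for a b by (metis permutes_inverses(1)[OF p])
  show "qmat_mul (qmat_adj (perm_qmat p)) (perm_qmat p) = qmat_one"
    by (simp add: vec_eq_iff qmat_mul_nth qmat_adj_def perm_qmat_def qmat_one_def qmul_if_left qmul_if_right e ii
        permutes_inverses[OF p] cong: if_cong)
  have inj: "p i = p j \<longleftrightarrow> i = j" for i j using permutes_inj[OF p] by (auto dest: injD)
  show "qmat_mul (perm_qmat p) (qmat_adj (perm_qmat p)) = qmat_one"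
    by (simp add: vec_eq_iff qmat_mul_nth qmat_adj_def perm_qmat_def qmat_one_def qmul_if_left qmul_if_right inj
        cong: if_cong)
qed

lemma cont_qn[continuous_intros]: "continuous_on S f \<Longrightarrow> continuous_on S (\<lambda>x. qn (f x))"
  unfolding qn_def by (intro continuous_intros)

lemma meas_qn_entry: "(\<lambda>X::'n::finite qmat. qn (X $ l $ i)) \<in> borel_measurable borel"
  by (intro borel_measurable_continuous_onI continuous_intros)

lemma cont_qmat_adj[continuous_intros]:
  fixes f :: "'b::topological_space \<Rightarrow> 'n::finite qmat"
  shows "continuous_on S f \<Longrightarrow> continuous_on S (\<lambda>x. qmat_adj (f x))"
  unfolding qmat_adj_def qcnj_def by (intro continuous_intros)

lemma (in prob_space) EW_U:
  fixes U :: "'a \<Rightarrow> 'n::finite qmat"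
  assumes U: "U \<in> borel_measurable M"
  and unit: "\<forall>\<omega>\<in>space M. qmat_mul (U \<omega>) (qmat_adj (U \<omega>)) = qmat_one"
  and inv: "\<forall>p1 p2. p1 permutes UNIV \<longrightarrow> p2 permutes UNIV \<longrightarrow>
           distr M borel (\<lambda>\<omega>. qmat_mul (qmat_mul (perm_qmat p1) (U \<omega>)) (perm_qmat p2))
           = distr M borel U"
  shows "integrable M (\<lambda>\<omega>. qn (U \<omega> $ l $ i))" "(\<integral>\<omega>. qn (U \<omega> $ l $ i) \<partial>M) = 1 / real CARD('n)"
proof -
  have measq: "(\<lambda>\<omega>. qn (U \<omega> $ l $ i)) \<in> borel_measurable M" for l i
    using measurable_compose[OF U meas_qn_entry] .
  have bnd: "qn (U \<omega> $ l $ i) \<le> 1" if "\<omega> \<in> space M" for \<omega> l i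
  proof -
    have "qn (U \<omega> $ l $ i) \<le> (\<Sum>i'\<in>UNIV. qn (U \<omega> $ l $ i'))"
      by (rule member_le_sum) (auto simp: qn_nonneg)
    also have "\<dots> = 1" using row_sum unit that by blast
    finally show ?thesis .
  qed
  have intq: "integrable M (\<lambda>\<omega>. qn (U \<omega> $ l $ i))" for l i
    by (rule integrable_const_bound[where B=1]) (use bnd qn_nonneg measq in auto)
  then show "integrable M (\<lambda>\<omega>. qn (U \<omega> $ l $ i))" .
  define c where "c i l = (\<integral>\<omega>. qn (U \<omega> $ l $ i) \<partial>M)" for i l
  have sym: "c i l = c i' l'" for i l i' l'
  proof -
    define p1 where "p1 = Transposition.transpose l l'"
    define p2 where "p2 = Transposition.transpose i i'"
    have pp: "p1 permutes UNIV" "p2 permutes UNIV" unfolding p1_def p2_def by (auto intro: permutes_swap_id)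
    have mm: "(\<lambda>\<omega>. qmat_mul (qmat_mul (perm_qmat p1) (U \<omega>)) (perm_qmat p2)) \<in> borel_measurable M"
      by (rule measurable_compose[OF U]) (intro borel_measurable_continuous_onI continuous_intros)
    have "c i' l' = (\<integral>\<omega>. qn (qmat_mul (qmat_mul (perm_qmat p1) (U \<omega>)) (perm_qmat p2) $ l $ i) \<partial>M)"
      unfolding c_def p1_def p2_def perm_right_tr perm_left by simp
    also have "\<dots> = integral\<^sup>L (distr M borel (\<lambda>\<omega>. qmat_mul (qmat_mul (perm_qmat p1) (U \<omega>)) (perm_qmat p2))) (\<lambda>X. qn (X $ l $ i))"
      by (rule integral_distr[symmetric, OF mm meas_qn_entry])
    also have "\<dots> = integral\<^sup>L (distr M borel U) (\<lambda>X. qn (X $ l $ i))"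
      using inv pp by simp
    also have "\<dots> = c i l" unfolding c_def
      by (rule integral_distr[OF U meas_qn_entry])
    finally show ?thesis by simp
  qed
  have "(\<Sum>i\<in>UNIV. \<Sum>l\<in>UNIV. c i l) = (\<integral>\<omega>. (\<Sum>i\<in>UNIV. \<Sum>l\<in>UNIV. qn (U \<omega> $ l $ i)) \<partial>M)"
    unfolding c_def using intq by (simp add: integral_sum integrable_sum)
  also have "\<dots> = (\<integral>\<omega>. real CARD('n) \<partial>M)"
  proof -
    have "(\<Sum>i\<in>UNIV. \<Sum>l\<in>UNIV. qn (U \<omega> $ l $ i)) = real CARD('n)" if "\<omega> \<in> space M" for \<omega>
    proof -
      have "(\<Sum>l\<in>UNIV. \<Sum>i\<in>UNIV. qn (U \<omega> $ l $ i)) = real CARD('n)"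
        using row_sum[of "U \<omega>"] unit that by simp
      then show ?thesis by (subst sum.swap)
    qed
    then show ?thesis by (intro Bochner_Integration.integral_cong) auto
  qed
  also have "\<dots> = real CARD('n)" by (simp add: prob_space)
  moreover have "(\<Sum>i'\<in>UNIV. \<Sum>l'\<in>UNIV. c i' l') = (\<Sum>i'\<in>(UNIV::'n set). \<Sum>l'\<in>(UNIV::'n set). c i l)"
    by (intro sum.cong refl sym)
  ultimately have "real CARD('n) * real CARD('n) * c i l = real CARD('n)"
    by simp
  then show "(\<integral>\<omega>. qn (U \<omega> $ l $ i) \<partial>M) = 1 / real CARD('n)"
    unfolding c_def by (simp add: field_simps)
qed

lemma (in prob_space) EW_P:
  fixes Pi :: "'a \<Rightarrow> ('n::finite \<Rightarrow> 'n)"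
  assumes P: "Pi \<in> measurable M (count_space UNIV)"
  and D: "distr M (count_space UNIV) Pi = uniform_measure (count_space UNIV) {p. p permutes UNIV}"
  shows "integrable M (\<lambda>\<omega>. qn (perm_qmat (Pi \<omega>) $ l $ i))"
    "(\<integral>\<omega>. qn (perm_qmat (Pi \<omega>) $ l $ i) \<partial>M) = 1 / real CARD('n)"
proof -
  define S where "S = {p::'n\<Rightarrow>'n. p permutes UNIV}"
  have fS: "finite S" by (rule rev_finite_subset[OF finite_class.finite_UNIV]) simp
  have neS: "S \<noteq> {}" unfolding S_def using permutes_id by blast
  define A where "A i = {p::'n\<Rightarrow>'n. p l = i}" for i
  have q: "qn (perm_qmat p $ l $ i) = indicator (A i) p" for p i
    by (simp add: qn_perm A_def indicator_def)
  have measq: "(\<lambda>\<omega>. qn (perm_qmat (Pi \<omega>) $ l $ i)) \<in> borel_measurable M" for i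
    by (rule measurable_compose[OF P]) simp
  show "integrable M (\<lambda>\<omega>. qn (perm_qmat (Pi \<omega>) $ l $ i))"
    by (rule integrable_const_bound[where B=1]) (use measq in \<open>auto simp: qn_perm\<close>)
  have E: "(\<integral>\<omega>. qn (perm_qmat (Pi \<omega>) $ l $ i) \<partial>M) = real (card (S \<inter> A i)) / real (card S)" for i
  proof -
    have "(\<integral>\<omega>. qn (perm_qmat (Pi \<omega>) $ l $ i) \<partial>M) = (\<integral>\<omega>. indicator (A i) (Pi \<omega>) \<partial>M)"
      by (simp add: q)
    also have "\<dots> = integral\<^sup>L (distr M (count_space UNIV) Pi) (indicator (A i))"
      by (rule integral_distr[symmetric, OF P]) simp
    also have "\<dots> = measure (uniform_measure (count_space UNIV) S) (A i)"
      unfolding D S_def by simp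
    also have "\<dots> = measure (count_space UNIV) (S \<inter> A i) / measure (count_space UNIV) S"
      using fS neS by (subst measure_uniform_measure) auto
    also have "\<dots> = real (card (S \<inter> A i)) / real (card S)"
      using fS by simp
    finally show ?thesis .
  qed
  have cnt: "card (S \<inter> A i) = card (S \<inter> A i')" for i i'
  proof (rule bij_betw_same_card)
    let ?f = "\<lambda>p. Transposition.transpose i i' \<circ> p"
    show "bij_betw ?f (S \<inter> A i) (S \<inter> A i')"
    proof (rule bij_betw_byWitness[where f'="\<lambda>p. Transposition.transpose i i' \<circ> p"])
      show "\<forall>a\<in>S \<inter> A i. ?f (?f a) = a" by (simp add: fun_eq_iff)
      show "\<forall>a\<in>S \<inter> A i'. ?f (?f a) = a" by (simp add: fun_eq_iff)
      show "?f ` (S \<inter> A i) \<subseteq> S \<inter> A i'"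
        by (auto simp: S_def A_def intro!: permutes_compose permutes_swap_id)
      show "?f ` (S \<inter> A i') \<subseteq> S \<inter> A i"
        by (auto simp: S_def A_def intro!: permutes_compose permutes_swap_id)
    qed
  qed
  have "card S = card (\<Union>i. S \<inter> A i)" by (auto simp: A_def intro!: arg_cong[where f=card])
  also have "\<dots> = (\<Sum>i\<in>UNIV. card (S \<inter> A i))"
    using fS by (intro card_UN_disjoint) (auto simp: A_def)
  also have "\<dots> = (\<Sum>i'\<in>(UNIV::'n set). card (S \<inter> A i))"
    by (intro sum.cong refl cnt)
  also have "\<dots> = CARD('n) * card (S \<inter> A i)" by simp
  finally have "real (card S) = real CARD('n) * real (card (S \<inter> A i))" by simp
  moreover have "card S > 0" using fS neS by (simp add: card_gt_0_iff)
  ultimately have "real (card (S \<inter> A i)) \<noteq> 0" by auto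
  with \<open>real (card S) = real CARD('n) * real (card (S \<inter> A i))\<close> show "(\<integral>\<omega>. qn (perm_qmat (Pi \<omega>) $ l $ i) \<partial>M) = 1 / real CARD('n)"
    unfolding E by (simp add: field_simps)
qed

theorem mainTheorem3:
  fixes M :: "'a measure" and \<beta> :: nat
    and U :: "'a \<Rightarrow> 'n::finite qmat"
    and Pi :: "'a \<Rightarrow> ('n \<Rightarrow> 'n)"
    and L1 L2 :: "'a \<Rightarrow> real ^ 'n"
  assumes "prob_space M"
    and "CARD('n) \<ge> 2"
    and "\<beta> \<in> {1, 2, 4}"
    and "U \<in> borel_measurable M"
    and "\<forall>\<omega>\<in>space M. beta_orthogonal \<beta> (U \<omega>)"
    and "\<forall>p1 p2. p1 permutes UNIV \<longrightarrow> p2 permutes UNIV \<longrightarrow>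
           distr M borel (\<lambda>\<omega>. qmat_mul (qmat_mul (perm_qmat p1) (U \<omega>)) (perm_qmat p2))
           = distr M borel U"
    and "Pi \<in> measurable M (count_space UNIV)"
    and "distr M (count_space UNIV) Pi = uniform_measure (count_space UNIV) {p. p permutes UNIV}"
    and "L1 \<in> borel_measurable M" and "L2 \<in> borel_measurable M"
    and "\<forall>A\<in>sets borel. \<forall>B\<in>sets borel.
           measure M {\<omega>\<in>space M. L1 \<omega> \<in> A \<and> L2 \<omega> \<in> B}
           = measure M {\<omega>\<in>space M. L1 \<omega> \<in> A} * measure M {\<omega>\<in>space M. L2 \<omega> \<in> B}"
    and "\<forall>A\<in>sets borel. \<forall>B\<in>sets borel.
           measure M {\<omega>\<in>space M. (L1 \<omega>, L2 \<omega>) \<in> A \<and> U \<omega> \<in> B}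
           = measure M {\<omega>\<in>space M. (L1 \<omega>, L2 \<omega>) \<in> A} * measure M {\<omega>\<in>space M. U \<omega> \<in> B}"
    and "\<forall>A\<in>sets borel. \<forall>B.
           measure M {\<omega>\<in>space M. (L1 \<omega>, L2 \<omega>) \<in> A \<and> Pi \<omega> \<in> B}
           = measure M {\<omega>\<in>space M. (L1 \<omega>, L2 \<omega>) \<in> A} * measure M {\<omega>\<in>space M. Pi \<omega> \<in> B}"
    and "\<forall>i k. integrable M (\<lambda>\<omega>. (L1 \<omega> $ i) ^ k)"
    and "\<forall>i k. integrable M (\<lambda>\<omega>. (L2 \<omega> $ i) ^ k)"
  shows "\<forall>k\<in>{1, 2, 3::nat}.
     qphi M (\<lambda>\<omega>. qmat_pow (real_diag (L1 \<omega>)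
        + qmat_mul (qmat_mul (qmat_adj (U \<omega>)) (real_diag (L2 \<omega>))) (U \<omega>)) k)
   = qphi M (\<lambda>\<omega>. qmat_pow (real_diag (L1 \<omega>)
        + qmat_mul (qmat_mul (qmat_adj (perm_qmat (Pi \<omega>))) (real_diag (L2 \<omega>))) (perm_qmat (Pi \<omega>))) k)
   \<and> qphi M (\<lambda>\<omega>. qmat_pow (real_diag (L1 \<omega>)
        + qmat_mul (qmat_mul (qmat_adj (perm_qmat (Pi \<omega>))) (real_diag (L2 \<omega>))) (perm_qmat (Pi \<omega>))) k)
   = (\<Sum>j = 0..k. real (k choose j) * qphi M (\<lambda>\<omega>. qmat_pow (real_diag (L1 \<omega>)) j)
                                      * qphi M (\<lambda>\<omega>. qmat_pow (real_diag (L2 \<omega>)) (k - j)))"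
proof -
  interpret prob_space M by fact
  note U = assms(4) and orth = assms(5) and inv = assms(6) and P = assms(7) and D = assms(8)
  note L1 = assms(9) and L2 = assms(10) and r12 = assms(11) and rU = assms(12) and rP = assms(13)
  note m1 = assms(14)[rule_format] and m2 = assms(15)[rule_format]
  have L12: "(\<lambda>\<omega>. (L1 \<omega>, L2 \<omega>)) \<in> borel_measurable M" using L1 L2 by measurable
  have i12: "indep_var borel (\<lambda>\<omega>. f (L1 \<omega>)) borel (\<lambda>\<omega>. g (L2 \<omega>))"
    if "f \<in> borel_measurable borel" "g \<in> borel_measurable borel" for f g :: "real^'n \<Rightarrow> real"
    by (rule indep_var_rect_comp[OF L1 L2 r12 that])
  have iWU: "indep_var borel (\<lambda>\<omega>. f (L1 \<omega>, L2 \<omega>)) borel (\<lambda>\<omega>. qn (U \<omega> $ l $ i))"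
    if "f \<in> borel_measurable borel" for f :: "(real^'n) \<times> (real^'n) \<Rightarrow> real" and i l
    by (rule indep_var_rect_comp[OF L12 U rU that meas_qn_entry])
  have rP': "\<forall>A\<in>sets borel. \<forall>B\<in>sets (count_space UNIV).
           measure M {\<omega>\<in>space M. (L1 \<omega>, L2 \<omega>) \<in> A \<and> Pi \<omega> \<in> B}
           = measure M {\<omega>\<in>space M. (L1 \<omega>, L2 \<omega>) \<in> A} * measure M {\<omega>\<in>space M. Pi \<omega> \<in> B}"
    using rP by simp
  have iWP: "indep_var borel (\<lambda>\<omega>. f (L1 \<omega>, L2 \<omega>)) borel (\<lambda>\<omega>. qn (perm_qmat (Pi \<omega>) $ l $ i))"
    if "f \<in> borel_measurable borel" for f :: "(real^'n) \<times> (real^'n) \<Rightarrow> real" and i l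
    by (rule indep_var_rect_comp[OF L12 P rP' that]) simp
  have unitU: "\<forall>\<omega>\<in>space M. qmat_mul (U \<omega>) (qmat_adj (U \<omega>)) = qmat_one"
    using orth by (simp add: beta_orthogonal_def)
  have unitU': "AE \<omega> in M. qmat_mul (qmat_adj (U \<omega>)) (U \<omega>) = qmat_one \<and> qmat_mul (U \<omega>) (qmat_adj (U \<omega>)) = qmat_one"
    using orth by (intro AE_I2) (simp add: beta_orthogonal_def)
  have AEperm: "AE \<omega> in M. Pi \<omega> permutes UNIV"
  proof (rule AE_distrD[OF P])
    show "AE p in distr M (count_space UNIV) Pi. p permutes UNIV"
      unfolding D by (rule AE_uniform_measureI) auto
  qed
  have unitP: "AE \<omega> in M. qmat_mul (qmat_adj (perm_qmat (Pi \<omega>))) (perm_qmat (Pi \<omega>)) = qmat_one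
     \<and> qmat_mul (perm_qmat (Pi \<omega>)) (qmat_adj (perm_qmat (Pi \<omega>))) = qmat_one"
    using AEperm by eventually_elim (simp add: perm_unitary)
  have measU: "(\<lambda>\<omega>. qtrace_re (qmat_pow (real_diag (L1 \<omega>) + qmat_mul (qmat_mul (qmat_adj (U \<omega>)) (real_diag (L2 \<omega>))) (U \<omega>)) k)) \<in> borel_measurable M" for k
  proof -
    have c: "(\<lambda>z::((real^'n) \<times> (real^'n)) \<times> 'n qmat. qtrace_re (qmat_pow (real_diag (fst (fst z)) + qmat_mul (qmat_mul (qmat_adj (snd z)) (real_diag (snd (fst z)))) (snd z)) k)) \<in> borel_measurable borel"
      by (intro borel_measurable_continuous_onI continuous_intros)
    have "(\<lambda>\<omega>. ((L1 \<omega>, L2 \<omega>), U \<omega>)) \<in> borel_measurable M" using L1 L2 U by measurable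
    from measurable_compose[OF this c] show ?thesis by simp
  qed
  have measP: "(\<lambda>\<omega>. qtrace_re (qmat_pow (real_diag (L1 \<omega>) + qmat_mul (qmat_mul (qmat_adj (perm_qmat (Pi \<omega>))) (real_diag (L2 \<omega>))) (perm_qmat (Pi \<omega>))) k)) \<in> borel_measurable M" for k
  proof (rule measurable_compose_countable'[where I=UNIV and g=Pi and
        f="\<lambda>p \<omega>. qtrace_re (qmat_pow (real_diag (L1 \<omega>) + qmat_mul (qmat_mul (qmat_adj (perm_qmat p)) (real_diag (L2 \<omega>))) (perm_qmat p)) k)"])
    fix p :: "'n \<Rightarrow> 'n"
    show "(\<lambda>\<omega>. qtrace_re (qmat_pow (real_diag (L1 \<omega>) + qmat_mul (qmat_mul (qmat_adj (perm_qmat p)) (real_diag (L2 \<omega>))) (perm_qmat p)) k)) \<in> borel_measurable M"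
      using measurable_compose[OF L12 meas_trace_fixed[of "perm_qmat p" k]] by simp
  qed (use P in auto)
  show ?thesis
  proof (intro ballI conjI)
    fix k :: nat assume k: "k \<in> {1,2,3}"
    have A: "qphi M (\<lambda>\<omega>. qmat_pow (real_diag (L1 \<omega>) + qmat_mul (qmat_mul (qmat_adj (U \<omega>)) (real_diag (L2 \<omega>))) (U \<omega>)) k)
      = (\<Sum>j = 0..k. real (k choose j) * qphi M (\<lambda>\<omega>. qmat_pow (real_diag (L1 \<omega>)) j)
                                      * qphi M (\<lambda>\<omega>. qmat_pow (real_diag (L2 \<omega>)) (k - j)))"
      by (rule moment_formula[OF i12 iWU EW_U(1)[OF U unitU inv] EW_U(2)[OF U unitU inv] m1 m2 unitU' measU k])
    have B: "qphi M (\<lambda>\<omega>. qmat_pow (real_diag (L1 \<omega>) + qmat_mul (qmat_mul (qmat_adj (perm_qmat (Pi \<omega>))) (real_diag (L2 \<omega>))) (perm_qmat (Pi \<omega>))) k)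
      = (\<Sum>j = 0..k. real (k choose j) * qphi M (\<lambda>\<omega>. qmat_pow (real_diag (L1 \<omega>)) j)
                                      * qphi M (\<lambda>\<omega>. qmat_pow (real_diag (L2 \<omega>)) (k - j)))"
      by (rule moment_formula[OF i12 iWP EW_P(1)[OF P D] EW_P(2)[OF P D] m1 m2 unitP measP k])
    show "qphi M (\<lambda>\<omega>. qmat_pow (real_diag (L1 \<omega>) + qmat_mul (qmat_mul (qmat_adj (U \<omega>)) (real_diag (L2 \<omega>))) (U \<omega>)) k)
      = qphi M (\<lambda>\<omega>. qmat_pow (real_diag (L1 \<omega>) + qmat_mul (qmat_mul (qmat_adj (perm_qmat (Pi \<omega>))) (real_diag (L2 \<omega>))) (perm_qmat (Pi \<omega>))) k)"
      using A B by simp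
    show "qphi M (\<lambda>\<omega>. qmat_pow (real_diag (L1 \<omega>) + qmat_mul (qmat_mul (qmat_adj (perm_qmat (Pi \<omega>))) (real_diag (L2 \<omega>))) (perm_qmat (Pi \<omega>))) k)
      = (\<Sum>j = 0..k. real (k choose j) * qphi M (\<lambda>\<omega>. qmat_pow (real_diag (L1 \<omega>)) j)
                                      * qphi M (\<lambda>\<omega>. qmat_pow (real_diag (L2 \<omega>)) (k - j)))"
      by (rule B)
  qed
qed

end
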